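(* Let $C$ be a supersingular curve of genus $g$ over $\mathbb{F}_q$, and write its normalized Weil numbers as $\zeta_{k_1}^{t_1},\ldots,\zeta_{k_{2g}}^{t_{2g}}$, where $\zeta_k=e^{2\pi i/k}$, $k_j\geq 1$, and $\gcd(k_j,t_j)=1$ for each $j$. Let $r$ be a positive integer. Then $C$ is maximal over $\mathbb{F}_{q^r}$ if and only if (i) there exist an integer $s\geq 1$ and odd integers $b_1,\ldots,b_{2g}$ such that $k_j=2^s b_j$ for all $1\le j\le 2g$ (with the same $s$ for all $j$), and (ii) $r$ is an odd multiple of $2^{s-1}\operatorname{lcm}(b_1,\ldots,b_{2g})$.
   Context: For a smooth projective curve $C$ of genus $g$ over $\mathbb{F}_q$, the zeta function is $Z(C/\mathbb{F}_q,T)=\exp\big(\sum_{s\ge1} \#C(\mathbb{F}_{q^s})T^s/s\big)=\frac{L(T)}{(1-T)(1-qT)}$ with $L(T)=\prod_{i=1}^{2g}(1-\alpha_iT)\in\mathbb{Z}[T]$, $|\alpha_i|=\sqrt q$. The normalized Weil numbers of $C/\mathbb{F}_q$ are $\alpha_i/\sqrt q$; those of $C/\mathbb{F}_{q^r}$ are their $r$-th powers. $C$ is supersingular if all normalized Weil numbers are roots of unity. $C$ is maximal over $\mathbb{F}_{Q}$ if $\#C(\mathbb{F}_Q)=1+Q+2g\sqrt{Q}$, which holds if and only if all normalized Weil numbers of $C/\mathbb{F}_Q$ equal $-1$. *)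

theory Defs
  imports "HOL-Analysis.Analysis" "HOL-Computational_Algebra.Computational_Algebra"
begin

text \<open>A curve C of genus g over F_q is represented through its Weil numbers
  alpha 0, ..., alpha (2g-1): L(T) = prod (1 - alpha_j T).  Expanding the zeta function
  Z = L(T)/((1-T)(1-qT)) = exp(sum N_s T^s / s) gives N_s = 1 + q^s - sum_j alpha_j^s.\<close>

definition L_poly :: "(nat \<Rightarrow> complex) \<Rightarrow> nat \<Rightarrow> complex poly" where
  "L_poly \<alpha> g = (\<Prod>j<2*g. [:1, - \<alpha> j:])"

definition point_count :: "nat \<Rightarrow> (nat \<Rightarrow> complex) \<Rightarrow> nat \<Rightarrow> nat \<Rightarrow> complex" where
  "point_count q \<alpha> g s = 1 + of_nat q ^ s - (\<Sum>j<2*g. \<alpha> j ^ s)"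

definition maximal_over :: "nat \<Rightarrow> (nat \<Rightarrow> complex) \<Rightarrow> nat \<Rightarrow> nat \<Rightarrow> bool" where
  "maximal_over q \<alpha> g r \<longleftrightarrow>
     point_count q \<alpha> g r = complex_of_real (1 + real q ^ r + 2 * real g * sqrt (real q ^ r))"

definition supersingular :: "nat \<Rightarrow> (nat \<Rightarrow> complex) \<Rightarrow> nat \<Rightarrow> bool" where
  "supersingular q \<alpha> g \<longleftrightarrow>
     (\<forall>j<2*g. \<exists>n>0. (\<alpha> j / complex_of_real (sqrt (real q))) ^ n = 1)"

end

theory Submission
  imports Defs
begin



lemma aux3: "(a::complex) - x = a + y \<longleftrightarrow> x = - y"
  by auto

lemma cis_eq_m1: "cis y = -1 \<longleftrightarrow> cos y = -1"
proof
  assume "cis y = -1"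
  hence "Re (cis y) = Re (-1)" by simp
  thus "cos y = -1" by simp
next
  assume h: "cos y = -1"
  have "sin y ^ 2 = 0" using sin_cos_squared_add[of y] h by simp
  hence "sin y = 0" by simp
  thus "cis y = -1" using h by (simp add: complex_eq_iff)
qed

lemma unit_sum:
  fixes w :: "nat \<Rightarrow> complex"
  assumes "\<forall>j<n. norm (w j) = 1"
  shows "(\<Sum>j<n. w j) = - of_nat n \<longleftrightarrow> (\<forall>j<n. w j = -1)"
proof
  assume h: "(\<Sum>j<n. w j) = - of_nat n"
  have "(\<Sum>j<n. Re (w j)) = - real n" using arg_cong[OF h, of Re] by (simp add: Re_sum)
  hence "(\<Sum>j<n. Re (w j) + 1) = 0" by (simp add: sum.distrib)
  moreover have "\<forall>j\<in>{..<n}. Re (w j) + 1 \<ge> 0"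
    using assms abs_Re_le_cmod by (smt (verit) lessThan_iff)
  ultimately have re0: "\<forall>j\<in>{..<n}. Re (w j) + 1 = 0" using sum_nonneg_eq_0_iff[of "{..<n}" "\<lambda>j. Re (w j) + 1"] by blast
  hence re: "\<forall>j<n. Re (w j) = -1" by (smt (verit) lessThan_iff)
  show "\<forall>j<n. w j = -1"
  proof (intro allI impI)
    fix j assume j: "j < n"
    have "(Im (w j))^2 = 0" using cmod_power2[of "w j"] re assms j by simp
    thus "w j = -1" using re j by (simp add: complex_eq_iff)
  qed
next
  assume "\<forall>j<n. w j = -1" thus "(\<Sum>j<n. w j) = - of_nat n" by simp
qed

lemma odd_decomp_unique:
  fixes x y :: nat
  shows "odd x \<Longrightarrow> odd y \<Longrightarrow> 2^a*x = 2^b*y \<Longrightarrow> a = b \<and> x = y"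
proof (induction a arbitrary: b)
  case 0 thus ?case by (cases b) auto
next
  case (Suc a) thus ?case by (cases b) auto
qed

lemma odd_decomp_exists:
  fixes n :: nat assumes "n > 0" shows "\<exists>s uu. odd uu \<and> n = 2^s * uu"
  using assms
proof (induction n rule: less_induct)
  case (less n)
  show ?case
  proof (cases "even n")
    case True
    then obtain h where h: "n = 2*h" by blast
    with less have "h < n" "h > 0" by auto
    then obtain s uu where "odd uu" "h = 2^s*uu" using less by blast
    thus ?thesis using h by (intro exI[of _ "Suc s"] exI[of _ uu]) auto
  next
    case False thus ?thesis by (intro exI[of _ 0] exI[of _ n]) auto
  qed
qed


lemma cis_pow_m1:
  fixes k r :: nat and t :: int
  assumes k: "k \<ge> 1" and cop: "coprime (int k) t"
  shows "cis (2 * pi * real_of_int t / real k) ^ r = -1 \<longleftrightarrow> (\<exists>m::nat. odd m \<and> 2*r = m*k)"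
proof -
  have kpos: "real k > 0" using k by simp
  have step: "real r * (2 * pi * real_of_int t / real k) = (2 * real_of_int n + 1) * pi
      \<longleftrightarrow> 2 * int r * t = (2*n+1) * int k" for n :: int
  proof -
    define R where "R = 2 * real_of_int n + 1"
    have "real r * (2 * pi * real_of_int t / real k) = R * pi
       \<longleftrightarrow> 2 * real r * real_of_int t = R * real k"
    proof -
      have "real r * (2 * pi * real_of_int t / real k) = (pi * (2 * real r * real_of_int t)) / real k"
        by simp
      also have "\<dots> = R * pi \<longleftrightarrow> pi * (2 * real r * real_of_int t) = (R * pi) * real k"
        using kpos by (simp add: divide_eq_eq)
      also have "(R * pi) * real k = pi * (R * real k)" by simp
      finally show ?thesis using pi_gt_zero by simp
    qed
    also have "\<dots> \<longleftrightarrow> real_of_int (2 * int r * t) = real_of_int ((2*n+1) * int k)"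
      unfolding R_def by simp
    also have "\<dots> \<longleftrightarrow> 2 * int r * t = (2*n+1) * int k" by (rule of_int_eq_iff)
    finally show ?thesis unfolding R_def .
  qed
  have "cis (2 * pi * real_of_int t / real k) ^ r = -1 \<longleftrightarrow> (\<exists>n::int. 2 * int r * t = (2*n+1) * int k)"
    unfolding Complex.DeMoivre cis_eq_m1 cos_eq_minus1 by (rule ex_cong1) (rule step)
  also have "\<dots> \<longleftrightarrow> (\<exists>m::nat. odd m \<and> 2*r = m*k)"
  proof
    assume "\<exists>n::int. 2 * int r * t = (2*n+1) * int k"
    then obtain n :: int where n: "2 * int r * t = (2*n+1) * int k" by blast
    have "(2 * int r) * t = int k * (2*n+1)" using n by (simp add: algebra_simps)
    hence "int k dvd (2 * int r) * t" by (rule dvdI)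
    hence "int k dvd 2 * int r" using coprime_dvd_mult_left_iff[OF cop] by blast
    then obtain M where M: "2 * int r = int k * M" by blast
    have M0: "M \<ge> 0"
    proof (rule ccontr)
      assume "\<not> M \<ge> 0"
      hence "int k * M < 0" using kpos by (simp add: mult_pos_neg)
      thus False using M by simp
    qed
    have "int k * (M * t) = int k * (2*n+1)" using n M by (simp add: algebra_simps)
    hence "M * t = 2*n+1" using kpos by simp
    hence "odd (M * t)" by simp
    hence "odd M" by simp
    hence "odd (nat M)" using M0 by (simp add: even_nat_iff)
    moreover have "2*r = nat M * k"
    proof -
      have "int (2*r) = int (nat M * k)" using M M0 by simp
      thus ?thesis by (simp only: of_nat_eq_iff)
    qed
    ultimately show "\<exists>m::nat. odd m \<and> 2*r = m*k" by blast
  next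
    assume "\<exists>m::nat. odd m \<and> 2*r = m*k"
    then obtain m :: nat where m: "odd m" "2*r = m*k" by blast
    have "even (m*k)" using m by (metis dvd_triv_left)
    hence "even k" using m by simp
    have "odd t"
    proof
      assume "even t"
      moreover have "(2::int) dvd int k" using \<open>even k\<close> by simp
      ultimately have "is_unit (2::int)" using coprime_common_divisor[OF cop] by blast
      thus False by simp
    qed
    hence "odd (int m * t)" using m by simp
    then obtain n where n: "int m * t = 2*n+1" by (metis oddE)
    have "int (2*r) = int m * int k" using m by simp
    hence "2 * int r * t = (int m * t) * int k" by (simp add: algebra_simps)
    thus "\<exists>n::int. 2 * int r * t = (2*n+1) * int k" using n by auto
  qed
  finally show ?thesis .
qed

lemma nat_part:
  fixes r n :: nat and k :: "nat \<Rightarrow> nat"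
  assumes r: "r \<ge> 1" and kp: "\<forall>j<n. k j \<ge> 1"
  shows "(\<forall>j<n. \<exists>m::nat. odd m \<and> 2*r = m*k j) \<longleftrightarrow>
     (\<exists>s\<ge>1. \<exists>b :: nat \<Rightarrow> nat.
        (\<forall>j<n. odd (b j) \<and> k j = 2 ^ s * b j) \<and>
        (\<exists>m::nat. odd m \<and> r = m * (2 ^ (s - 1) * Lcm (b ` {..<n}))))"
proof
  assume H: "\<forall>j<n. \<exists>m::nat. odd m \<and> 2*r = m*k j"
  obtain s uu where so: "odd uu" "2*r = 2^s*uu" using odd_decomp_exists[of "2*r"] r by auto
  have s1: "s \<ge> 1" using so by (cases s) auto
  define b where "b j = k j div 2^s" for j
  have bj: "odd (b j) \<and> k j = 2^s * b j \<and> b j dvd uu" if j: "j < n" for j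
  proof -
    obtain mj where mj: "odd mj" "2*r = mj * k j" using H j by blast
    have kj0: "k j > 0" using kp j by auto
    obtain a c where ac: "odd c" "k j = 2^a*c" using odd_decomp_exists[OF kj0] by blast
    have "2^s*uu = 2^a*(mj*c)" using so mj ac by (simp add: algebra_simps)
    moreover have "odd (mj*c)" using mj ac by simp
    ultimately have "s = a \<and> uu = mj*c" using odd_decomp_unique so by metis
    thus ?thesis using ac b_def by auto
  qed
  have "Lcm (b ` {..<n}) dvd uu" using bj by (auto intro: Lcm_least)
  then obtain m' where m': "uu = Lcm (b ` {..<n}) * m'" by blast
  have "odd m'" using m' so by simp
  have "r = 2^(s-1) * uu" using so s1 by (cases s) auto
  hence "r = m' * (2 ^ (s - 1) * Lcm (b ` {..<n}))" using m' by simp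
  thus "\<exists>s\<ge>1. \<exists>b :: nat \<Rightarrow> nat.
        (\<forall>j<n. odd (b j) \<and> k j = 2 ^ s * b j) \<and>
        (\<exists>m::nat. odd m \<and> r = m * (2 ^ (s - 1) * Lcm (b ` {..<n})))"
    using s1 bj \<open>odd m'\<close> by blast
next
  assume "\<exists>s\<ge>1. \<exists>b :: nat \<Rightarrow> nat.
        (\<forall>j<n. odd (b j) \<and> k j = 2 ^ s * b j) \<and>
        (\<exists>m::nat. odd m \<and> r = m * (2 ^ (s - 1) * Lcm (b ` {..<n})))"
  then obtain s b m where s1: "s \<ge> 1" and b: "\<forall>j<n. odd (b j) \<and> k j = 2 ^ s * b j"
    and m: "odd m" "r = m * (2 ^ (s - 1) * Lcm (b ` {..<n}))" by blast
  define L where "L = Lcm (b ` {..<n})"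
  have "L dvd prod b {..<n}" unfolding L_def by (auto intro!: Lcm_least dvd_prodI)
  moreover have "odd (prod b {..<n})" using b by (simp add: even_prod_iff)
  ultimately have Lodd: "odd L" by (meson dvd_trans)
  show "\<forall>j<n. \<exists>m::nat. odd m \<and> 2*r = m*k j"
  proof (intro allI impI)
    fix j assume j: "j < n"
    have "b j dvd L" unfolding L_def using j by (auto intro: dvd_Lcm)
    then obtain c where c: "L = b j * c" by blast
    have "odd c" using c Lodd by simp
    have "2*r = m * (2 * 2^(s-1)) * L" using m L_def by simp
    also have "2 * 2^(s-1) = (2::nat)^s" using s1 by (cases s) auto
    finally have "2*r = (m*c) * k j" using c b j by (simp add: algebra_simps)
    thus "\<exists>m::nat. odd m \<and> 2*r = m*k j" using \<open>odd m\<close> \<open>odd c\<close> by (intro exI[of _ "m*c"]) simp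
  qed
qed

theorem mainTheorem1:
  fixes q g r :: nat and \<alpha> :: "nat \<Rightarrow> complex" and k :: "nat \<Rightarrow> nat" and t :: "nat \<Rightarrow> int"
  assumes q_pp: "\<exists>p e. prime p \<and> e \<ge> 1 \<and> q = p ^ e"
    and weil_abs: "\<forall>j<2*g. norm (\<alpha> j) = sqrt (real q)"
    and L_int: "\<forall>i. coeff (L_poly \<alpha> g) i \<in> \<int>"
    and ss: "supersingular q \<alpha> g"
    and k_pos: "\<forall>j<2*g. k j \<ge> 1"
    and kt_coprime: "\<forall>j<2*g. coprime (int (k j)) (t j)"
    and normalized: "\<forall>j<2*g. \<alpha> j / complex_of_real (sqrt (real q))
                        = cis (2 * pi * real_of_int (t j) / real (k j))"
    and r_pos: "r \<ge> 1"
  shows "maximal_over q \<alpha> g r \<longleftrightarrow>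
     (\<exists>s\<ge>1. \<exists>b :: nat \<Rightarrow> nat.
        (\<forall>j<2*g. odd (b j) \<and> k j = 2 ^ s * b j) \<and>
        (\<exists>m::nat. odd m \<and> r = m * (2 ^ (s - 1) * Lcm (b ` {..<2*g}))))"
proof -
  obtain p e where pe: "prime p" "e \<ge> 1" "q = p ^ e" using q_pp by blast
  have qpos: "q > 0" using pe prime_gt_0_nat by simp
  define c where "c = sqrt (real q)"
  have cpos: "c > 0" using qpos c_def by simp
  define z where "z j = \<alpha> j / complex_of_real c" for j
  have az: "\<alpha> j = complex_of_real c * z j" for j
    using cpos z_def by simp
  have nz: "\<forall>j<2*g. norm (z j ^ r) = 1"
    using weil_abs cpos by (simp add: z_def norm_divide norm_power c_def)
  have sumeq: "(\<Sum>j<2*g. \<alpha> j ^ r) = complex_of_real (c ^ r) * (\<Sum>j<2*g. z j ^ r)"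
    by (simp add: az power_mult_distrib sum_distrib_left)
  have sq: "sqrt (real q ^ r) = c ^ r" by (simp add: c_def real_sqrt_power)
  have "maximal_over q \<alpha> g r \<longleftrightarrow>
      1 + of_nat q ^ r - complex_of_real (c ^ r) * (\<Sum>j<2*g. z j ^ r)
        = 1 + of_nat q ^ r + of_nat (2*g) * complex_of_real (c ^ r)"
    unfolding maximal_over_def point_count_def sumeq sq by simp
  also have "\<dots> \<longleftrightarrow> complex_of_real (c ^ r) * (\<Sum>j<2*g. z j ^ r)
        = - (of_nat (2*g) * complex_of_real (c ^ r))"
    by (rule aux3)
  also have "\<dots> \<longleftrightarrow> complex_of_real (c ^ r) * (\<Sum>j<2*g. z j ^ r)
        = complex_of_real (c ^ r) * (- of_nat (2*g))"
    by (simp add: mult.commute)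
  also have "\<dots> \<longleftrightarrow> (\<Sum>j<2*g. z j ^ r) = - of_nat (2*g)"
    by (rule mult_left_cancel) (use cpos in simp)
  also have "\<dots> \<longleftrightarrow> (\<forall>j<2*g. z j ^ r = -1)"
    using unit_sum[OF nz] .
  also have "\<dots> \<longleftrightarrow> (\<forall>j<2*g. \<exists>m::nat. odd m \<and> 2*r = m*k j)"
    using normalized cis_pow_m1 k_pos kt_coprime unfolding z_def c_def by simp
  also have "\<dots> \<longleftrightarrow> (\<exists>s\<ge>1. \<exists>b :: nat \<Rightarrow> nat.
        (\<forall>j<2*g. odd (b j) \<and> k j = 2 ^ s * b j) \<and>
        (\<exists>m::nat. odd m \<and> r = m * (2 ^ (s - 1) * Lcm (b ` {..<2*g}))))"
    by (rule nat_part[OF r_pos]) (use k_pos in simp)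
  finally show ?thesis .
qed

end
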